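(* Let $n\in\mathbb{N}$ and let $k$ be an integer with $0\le k\le n-1$. Then $$|PF_{n+1,k}| = \sum_{i=0}^{n} \binom{n}{i}\, \min\big((i+1)+k,\; n+1\big)\, |PF_{i,k}|\,(n-i+1)^{n-i-1},$$ with the convention $|PF_{0,k}|=1$.
   Context: For $n\in\mathbb{N}=\{1,2,\dots\}$ let $[n]=\{1,\dots,n\}$. A parking preference of length $n$ is a tuple $\alpha=(a_1,\dots,a_n)\in[n]^n$; let $PP_n=[n]^n$. For an integer $k\ge 0$, the $k$-Naples parking rule is as follows. There are $n$ parking spots numbered $1,\dots,n$ from west to east, initially empty, and cars $c_1,\dots,c_n$ arrive in this order; car $c_i$ has preferred spot $a_i$. If spot $a_i$ is empty, $c_i$ parks there. Otherwise $c_i$ checks the spots $a_i-1,a_i-2,\dots,a_i-k$, in this order, skipping any that are $<1$, and parks in the first empty one among them. If all these spots are occupied (or there are none), $c_i$ drives east and parks in the first empty spot with number greater than $a_i$; if there is no such spot, $c_i$ fails to park. $\alpha$ is a $k$-Naples parking function of length $n$ if every car parks. $PF_{n,k}$ denotes the set of $k$-Naples parking functions of length $n$ (defined for every integer $k\ge 0$). For $k=0$ this is the classical parking rule, and $PF_{n,0}=PF_n$ is the set of classical parking functions. *)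

theory Defs
  imports Main
begin

text \<open>Spots a-j with j < a are exactly those >= 1.\<close>
definition park_step :: "nat \<Rightarrow> nat \<Rightarrow> nat set \<Rightarrow> nat \<Rightarrow> nat option" where
  "park_step k n occ a =
    (if a \<notin> occ then Some a
     else if (\<exists>j. 1 \<le> j \<and> j \<le> k \<and> j < a \<and> a - j \<notin> occ)
       then Some (a - (LEAST j. 1 \<le> j \<and> j \<le> k \<and> j < a \<and> a - j \<notin> occ))
     else if (\<exists>s. a < s \<and> s \<le> n \<and> s \<notin> occ)
       then Some (LEAST s. a < s \<and> s \<le> n \<and> s \<notin> occ)
     else None)"

fun parks :: "nat \<Rightarrow> nat \<Rightarrow> nat set \<Rightarrow> nat list \<Rightarrow> bool" where
  "parks k n occ [] = True"
| "parks k n occ (a # as) =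
     (case park_step k n occ a of
        None \<Rightarrow> False
      | Some s \<Rightarrow> parks k n (insert s occ) as)"

definition PF :: "nat \<Rightarrow> nat \<Rightarrow> nat list set" where
  "PF n k = {\<alpha>. length \<alpha> = n \<and> set \<alpha> \<subseteq> {1..n} \<and> parks k n {} \<alpha>}"

end

theory Submission
  imports Defs
begin

lemma ps_free: "a \<notin> occ \<Longrightarrow> park_step k n occ a = Some a"
  by (simp add: park_step_def)

lemma ps_back:
  assumes "a \<in> occ" "1 \<le> j0" "j0 \<le> k" "j0 < a" "a - j0 \<notin> occ"
    "\<And>j. 1 \<le> j \<Longrightarrow> j < j0 \<Longrightarrow> a - j \<in> occ"
  shows "park_step k n occ a = Some (a - j0)"
proof -
  have L: "(LEAST j. 1 \<le> j \<and> j \<le> k \<and> j < a \<and> a - j \<notin> occ) = j0"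
  proof (rule Least_equality)
    show "1 \<le> j0 \<and> j0 \<le> k \<and> j0 < a \<and> a - j0 \<notin> occ" using assms by simp
    fix y assume "1 \<le> y \<and> y \<le> k \<and> y < a \<and> a - y \<notin> occ"
    then show "j0 \<le> y" using assms(6)[of y] by (meson not_le)
  qed
  have E: "\<exists>j. 1 \<le> j \<and> j \<le> k \<and> j < a \<and> a - j \<notin> occ" using assms by blast
  show ?thesis unfolding park_step_def using assms(1) L E by simp
qed

lemma ps_fwd:
  assumes "a \<in> occ" "\<And>j. 1 \<le> j \<Longrightarrow> j \<le> k \<Longrightarrow> j < a \<Longrightarrow> a - j \<in> occ"
    "a < s" "s \<le> n" "s \<notin> occ" "\<And>s'. a < s' \<Longrightarrow> s' < s \<Longrightarrow> s' \<in> occ"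
  shows "park_step k n occ a = Some s"
proof -
  have L: "(LEAST s'. a < s' \<and> s' \<le> n \<and> s' \<notin> occ) = s"
  proof (rule Least_equality)
    show "a < s \<and> s \<le> n \<and> s \<notin> occ" using assms by simp
    fix y assume "a < y \<and> y \<le> n \<and> y \<notin> occ"
    then show "s \<le> y" using assms(6)[of y] by (meson not_le)
  qed
  have NB: "\<not> (\<exists>j. 1 \<le> j \<and> j \<le> k \<and> j < a \<and> a - j \<notin> occ)" using assms(2) by blast
  have E: "\<exists>s'. a < s' \<and> s' \<le> n \<and> s' \<notin> occ" using assms by blast
  have A: "\<not> (a \<notin> occ)" using assms(1) by simp
  show ?thesis unfolding park_step_def
    by (subst if_not_P[OF A], subst if_not_P[OF NB], subst if_P[OF E], simp only: L)
qed

lemma ps_none: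
  assumes "a \<in> occ" "\<And>j. 1 \<le> j \<Longrightarrow> j \<le> k \<Longrightarrow> j < a \<Longrightarrow> a - j \<in> occ"
    "\<And>s'. a < s' \<Longrightarrow> s' \<le> n \<Longrightarrow> s' \<in> occ"
  shows "park_step k n occ a = None"
proof -
  have N1: "\<not> (\<exists>j. 1 \<le> j \<and> j \<le> k \<and> j < a \<and> a - j \<notin> occ)" using assms(2) by blast
  have N2: "\<not> (\<exists>s. a < s \<and> s \<le> n \<and> s \<notin> occ)" using assms(3) by blast
  have A: "\<not> (a \<notin> occ)" using assms(1) by simp
  show ?thesis unfolding park_step_def
    by (simp only: if_not_P[OF A] if_not_P[OF N1] if_not_P[OF N2])
qed

lemma ps_cases:
  obtains (pfree) "a \<notin> occ" "park_step k n occ a = Some a"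
  | (pback) j0 where "a \<in> occ" "1 \<le> j0" "j0 \<le> k" "j0 < a" "a - j0 \<notin> occ"
    "\<And>j. 1 \<le> j \<Longrightarrow> j < j0 \<Longrightarrow> a - j \<in> occ" "park_step k n occ a = Some (a - j0)"
  | (pfwd) s where "a \<in> occ" "\<And>j. 1 \<le> j \<Longrightarrow> j \<le> k \<Longrightarrow> j < a \<Longrightarrow> a - j \<in> occ"
    "a < s" "s \<le> n" "s \<notin> occ" "\<And>s'. a < s' \<Longrightarrow> s' < s \<Longrightarrow> s' \<in> occ"
    "park_step k n occ a = Some s"
  | (pnone) "a \<in> occ" "\<And>j. 1 \<le> j \<Longrightarrow> j \<le> k \<Longrightarrow> j < a \<Longrightarrow> a - j \<in> occ"
    "\<And>s'. a < s' \<Longrightarrow> s' \<le> n \<Longrightarrow> s' \<in> occ" "park_step k n occ a = None"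
proof (cases "a \<in> occ")
  case False show ?thesis by (rule pfree[OF False ps_free[OF False]])
next
  case T: True
  show ?thesis
  proof (cases "\<exists>j. 1 \<le> j \<and> j \<le> k \<and> j < a \<and> a - j \<notin> occ")
    case True
    define j0 where "j0 = (LEAST j. 1 \<le> j \<and> j \<le> k \<and> j < a \<and> a - j \<notin> occ)"
    have P: "1 \<le> j0 \<and> j0 \<le> k \<and> j0 < a \<and> a - j0 \<notin> occ"
      unfolding j0_def by (rule LeastI_ex) (rule True)
    have Q: "a - j \<in> occ" if "1 \<le> j" "j < j0" for j
      using not_less_Least[of j "\<lambda>j. 1 \<le> j \<and> j \<le> k \<and> j < a \<and> a - j \<notin> occ"] that P
      unfolding j0_def[symmetric] by auto
    from P have P1: "1 \<le> j0" and P2: "j0 \<le> k" and P3: "j0 < a" and P4: "a - j0 \<notin> occ" by auto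
    show ?thesis by (rule pback[OF T P1 P2 P3 P4 Q ps_back[OF T P1 P2 P3 P4 Q]])
  next
    case F1: False
    show ?thesis
    proof (cases "\<exists>s. a < s \<and> s \<le> n \<and> s \<notin> occ")
      case True
      define s where "s = (LEAST s. a < s \<and> s \<le> n \<and> s \<notin> occ)"
      have P: "a < s \<and> s \<le> n \<and> s \<notin> occ"
        unfolding s_def by (rule LeastI_ex) (rule True)
      have Q: "s' \<in> occ" if "a < s'" "s' < s" for s'
        using not_less_Least[of s' "\<lambda>s. a < s \<and> s \<le> n \<and> s \<notin> occ"] that P
        unfolding s_def[symmetric] by auto
      have B: "\<And>j. 1 \<le> j \<Longrightarrow> j \<le> k \<Longrightarrow> j < a \<Longrightarrow> a - j \<in> occ" using F1 by blast
      from P have P1: "a < s" and P2: "s \<le> n" and P3: "s \<notin> occ" by auto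
      show ?thesis by (rule pfwd[OF T B P1 P2 P3 Q ps_fwd[OF T B P1 P2 P3 Q]])
    next
      case False
      have B: "\<And>j. 1 \<le> j \<Longrightarrow> j \<le> k \<Longrightarrow> j < a \<Longrightarrow> a - j \<in> occ" using F1 by blast
      have C: "\<And>s'. a < s' \<Longrightarrow> s' \<le> n \<Longrightarrow> s' \<in> occ" using False by blast
      show ?thesis by (rule pnone[OF T B C ps_none[OF T B C]])
    qed
  qed
qed

fun run :: "nat \<Rightarrow> nat \<Rightarrow> nat set \<Rightarrow> nat list \<Rightarrow> nat set option" where
  "run k n occ [] = Some occ"
| "run k n occ (a # as) = (case park_step k n occ a of None \<Rightarrow> None | Some s \<Rightarrow> run k n (insert s occ) as)"

lemma parks_run: "parks k n occ xs \<longleftrightarrow> run k n occ xs \<noteq> None"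
  by (induction xs arbitrary: occ) (auto split: option.splits)

lemma ps_notin: "park_step k n occ a = Some s \<Longrightarrow> s \<notin> occ"
  by (cases rule: ps_cases[of a occ k n]) auto

lemma ps_self: "park_step k n occ a = Some s \<Longrightarrow> a \<notin> occ \<Longrightarrow> s = a"
  by (simp add: ps_free)

lemma ps_range: "park_step k n occ a = Some s \<Longrightarrow> 1 \<le> a \<Longrightarrow> a \<le> n \<Longrightarrow> 1 \<le> s \<and> s \<le> n"
  by (cases rule: ps_cases[of a occ k n]) auto

lemma run_mono: "run k n occ xs = Some F \<Longrightarrow> occ \<subseteq> F"
  by (induction xs arbitrary: occ) (fastforce split: option.splits)+

lemma run_set: "run k n occ xs = Some F \<Longrightarrow> set xs \<subseteq> F"
proof (induction xs arbitrary: occ)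
  case Nil then show ?case by simp
next
  case (Cons a xs)
  then obtain s where s: "park_step k n occ a = Some s" and r: "run k n (insert s occ) xs = Some F"
    by (auto split: option.splits)
  have "a \<in> insert s occ" using ps_self[OF s] by blast
  then show ?case using Cons.IH[OF r] run_mono[OF r] by auto
qed

lemma run_card: "finite occ \<Longrightarrow> run k n occ xs = Some F \<Longrightarrow> finite F \<and> card F = card occ + length xs"
proof (induction xs arbitrary: occ)
  case Nil then show ?case by simp
next
  case (Cons a xs)
  then obtain s where s: "park_step k n occ a = Some s" and r: "run k n (insert s occ) xs = Some F"
    by (auto split: option.splits)
  show ?case using Cons.IH[OF _ r] Cons.prems ps_notin[OF s] by simp
qed

lemma run_range: "run k n occ xs = Some F \<Longrightarrow> set xs \<subseteq> {1..n} \<Longrightarrow> F \<subseteq> occ \<union> {1..n}"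
proof (induction xs arbitrary: occ)
  case Nil then show ?case by simp
next
  case (Cons a xs)
  then obtain s where s: "park_step k n occ a = Some s" and r: "run k n (insert s occ) xs = Some F"
    by (auto split: option.splits)
  have "1 \<le> s \<and> s \<le> n" using ps_range[OF s] Cons.prems by auto
  then show ?case using Cons.IH[OF r] Cons.prems by auto
qed

lemma run_snoc: "run k n occ (xs @ [p]) = (case run k n occ xs of None \<Rightarrow> None
   | Some F \<Rightarrow> (case park_step k n F p of None \<Rightarrow> None | Some s \<Rightarrow> Some (insert s F)))"
  by (induction xs arbitrary: occ) (auto split: option.splits)

lemma last_ok:
  assumes "1 \<le> e" "e \<le> N" "1 \<le> p" "p \<le> N"
  shows "park_step k N ({1..N} - {e}) p \<noteq> None \<longleftrightarrow> p \<le> e + k"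
proof -
  let ?F = "{1..N} - {e}"
  consider "p = e" | "p < e" | "e < p" by linarith
  then show ?thesis
  proof cases
    case 1 then show ?thesis using ps_free[of p ?F k N] by simp
  next
    case 2
    have "park_step k N ?F p \<noteq> None"
    proof
      assume "park_step k N ?F p = None"
      then show False
        by (cases rule: ps_cases[of p ?F k N]) (use 2 assms in auto)
    qed
    then show ?thesis using 2 by simp
  next
    case 3
    show ?thesis
    proof
      assume "park_step k N ?F p \<noteq> None"
      then obtain s where s: "park_step k N ?F p = Some s" by auto
      show "p \<le> e + k"
      proof (rule ccontr)
        assume c: "\<not> p \<le> e + k"
        show False
        proof (cases rule: ps_cases[of p ?F k N])
          case pfree then show ?thesis using 3 assms by auto
        next
          case (pback j0) then show ?thesis using 3 assms c by auto
        next
          case (pfwd s) then show ?thesis using 3 assms c by auto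
        next
          case pnone then show ?thesis using s by simp
        qed
      qed
    next
      assume le: "p \<le> e + k"
      have pin: "p \<in> ?F" using 3 assms by auto
      have "park_step k N ?F p = Some (p - (p - e))"
      proof (cases rule: ps_cases[of p ?F k N])
        case pfree then show ?thesis using pin by auto
      next
        case (pback j0)
        have "j0 = p - e"
        proof (rule ccontr)
          assume "j0 \<noteq> p - e"
          then consider "j0 < p - e" | "j0 > p - e" by linarith
          then show False
          proof cases
            case 1 then show ?thesis using pback 3 assms by auto
          next
            case 2
            have "1 \<le> p - e" using 3 by simp
            from pback(6)[OF this 2] have "p - (p - e) \<in> ?F" .
            moreover have "p - (p - e) = e" using 3 by simp
            ultimately show ?thesis by simp
          qed
        qed
        then show ?thesis using pback by simp
      next
        case (pfwd s)
        have "1 \<le> p - e" "p - e \<le> k" "p - e < p" using 3 le assms by auto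
        from pfwd(2)[OF this] have "p - (p - e) \<in> ?F" .
        moreover have "p - (p - e) = e" using 3 by simp
        ultimately show ?thesis by simp
      next
        case pnone
        have "1 \<le> p - e" "p - e \<le> k" "p - e < p" using 3 le assms by auto
        from pnone(2)[OF this] have "p - (p - e) \<in> ?F" .
        moreover have "p - (p - e) = e" using 3 by simp
        ultimately show ?thesis by simp
      qed
      then show "park_step k N ?F p \<noteq> None" by simp
    qed
  qed
qed

lemma ps_left:
  assumes L: "L \<subseteq> {..<e}" and R: "Rs \<subseteq> {e<..}" and a: "1 \<le> a" "a < e" and eN: "e \<le> N"
  shows "(park_step k N (L \<union> Rs) a = Some s \<and> s \<noteq> e) \<longleftrightarrow> park_step k (e-1) L a = Some s"
proof (cases rule: ps_cases[of a L k "e-1"])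
  case pfree
  then have "a \<notin> L \<union> Rs" using R a by auto
  then show ?thesis using ps_free[of a "L \<union> Rs" k N] pfree a by auto
next
  case (pback j0)
  have "park_step k N (L \<union> Rs) a = Some (a - j0)"
    by (rule ps_back) (use pback R a in auto)
  then show ?thesis using pback a by auto
next
  case (pfwd s0)
  have "park_step k N (L \<union> Rs) a = Some s0"
    by (rule ps_fwd) (use pfwd R a eN in auto)
  then show ?thesis using pfwd a by auto
next
  case pnone
  have "park_step k N (L \<union> Rs) a = Some e"
  proof (rule ps_fwd)
    show "a \<in> L \<union> Rs" using pnone by auto
    show "\<And>j. 1 \<le> j \<Longrightarrow> j \<le> k \<Longrightarrow> j < a \<Longrightarrow> a - j \<in> L \<union> Rs" using pnone(2) by auto
    show "a < e" "e \<le> N" using a eN by auto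
    show "e \<notin> L \<union> Rs" using L R by auto
    show "\<And>s'. a < s' \<Longrightarrow> s' < e \<Longrightarrow> s' \<in> L \<union> Rs" using pnone(3) by auto
  qed
  then show ?thesis using pnone by auto
qed

lemma ps_right:
  assumes L: "L \<subseteq> {..<e}" and R: "e \<notin> Rs" and a: "e < a"
  shows "park_step k N (L \<union> Rs) a = park_step k N Rs a"
proof (cases rule: ps_cases[of a Rs k N])
  case pfree
  then have "a \<notin> L \<union> Rs" using L a by auto
  then show ?thesis using ps_free pfree by metis
next
  case (pback j0)
  have ge: "e \<le> a - j0"
  proof (rule ccontr)
    assume "\<not> e \<le> a - j0"
    then have "1 \<le> a - e" "a - e < j0" using a by auto
    from pback(6)[OF this] have "a - (a - e) \<in> Rs" .
    then show False using R a by simp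
  qed
  have "park_step k N (L \<union> Rs) a = Some (a - j0)"
    by (rule ps_back) (use pback L ge in auto)
  then show ?thesis using pback by simp
next
  case (pfwd s0)
  have "park_step k N (L \<union> Rs) a = Some s0"
    by (rule ps_fwd) (use pfwd L a in auto)
  then show ?thesis using pfwd by simp
next
  case pnone
  have "park_step k N (L \<union> Rs) a = None"
    by (rule ps_none) (use pnone in auto)
  then show ?thesis using pnone by simp
qed

lemma ps_geq:
  assumes "e \<notin> occ" "e < a" "park_step k N occ a = Some s"
  shows "e \<le> s"
proof (cases rule: ps_cases[of a occ k N])
  case pfree then show ?thesis using assms by auto
next
  case (pback j0)
  have ge: "e \<le> a - j0"
  proof (rule ccontr)
    assume "\<not> e \<le> a - j0"
    then have "1 \<le> a - e" "a - e < j0" using assms by auto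
    from pback(6)[OF this] have "a - (a - e) \<in> occ" .
    then show False using assms by simp
  qed
  then show ?thesis using pback assms by simp
next
  case (pfwd s0) then show ?thesis using assms by simp
next
  case pnone then show ?thesis using assms by simp
qed

lemma decomp:
  assumes "L \<subseteq> {..<e}" "Rs \<subseteq> {e<..}" "set \<beta> \<subseteq> {1..N} - {e}" "e \<le> N"
  shows "(\<exists>F. run k N (L \<union> Rs) \<beta> = Some F \<and> e \<notin> F) \<longleftrightarrow>
    (run k (e-1) L (filter (\<lambda>x. x < e) \<beta>) \<noteq> None \<and>
     (\<exists>R. run k N Rs (filter (\<lambda>x. e < x) \<beta>) = Some R \<and> e \<notin> R))"
  using assms
proof (induction \<beta> arbitrary: L Rs)
  case Nil then show ?case by auto
next
  case (Cons a \<beta>)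
  have a: "1 \<le> a" "a \<le> N" "a \<noteq> e" using Cons.prems by auto
  have bs: "set \<beta> \<subseteq> {1..N} - {e}" using Cons.prems by auto
  let ?fl = "filter (\<lambda>x. x < e) \<beta>" and ?fr = "filter (\<lambda>x. e < x) \<beta>"
  show ?case
  proof (cases "a < e")
    case lt: True
    have FL: "filter (\<lambda>x. x < e) (a # \<beta>) = a # ?fl" using lt by simp
    have FR: "filter (\<lambda>x. e < x) (a # \<beta>) = ?fr" using lt by simp
    show ?thesis
    proof
      assume "\<exists>F. run k N (L \<union> Rs) (a # \<beta>) = Some F \<and> e \<notin> F"
      then obtain F where F: "run k N (L \<union> Rs) (a # \<beta>) = Some F" and eF: "e \<notin> F" by blast
      then obtain s where s: "park_step k N (L \<union> Rs) a = Some s"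
        and r: "run k N (insert s (L \<union> Rs)) \<beta> = Some F"
        by (cases "park_step k N (L \<union> Rs) a") simp_all
      have "s \<noteq> e" using run_mono[OF r] eF by blast
      then have s': "park_step k (e-1) L a = Some s" using ps_left[OF Cons.prems(1,2) a(1) lt Cons.prems(4)] s by blast
      have "s \<le> e - 1" using ps_range[OF s'] a lt by simp
      then have L': "insert s L \<subseteq> {..<e}" using Cons.prems(1) lt by auto
      have E: "insert s (L \<union> Rs) = insert s L \<union> Rs" by blast
      have "\<exists>F. run k N (insert s L \<union> Rs) \<beta> = Some F \<and> e \<notin> F" using r eF unfolding E by blast
      from iffD1[OF Cons.IH[OF L' Cons.prems(2) bs Cons.prems(4)] this]
      have IH: "run k (e-1) (insert s L) ?fl \<noteq> None \<and> (\<exists>R. run k N Rs ?fr = Some R \<and> e \<notin> R)" .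
      have "run k (e-1) L (a # ?fl) = run k (e-1) (insert s L) ?fl" using s' by simp
      then show "run k (e-1) L (filter (\<lambda>x. x < e) (a # \<beta>)) \<noteq> None \<and>
     (\<exists>R. run k N Rs (filter (\<lambda>x. e < x) (a # \<beta>)) = Some R \<and> e \<notin> R)"
        using IH FL FR by simp
    next
      assume H: "run k (e-1) L (filter (\<lambda>x. x < e) (a # \<beta>)) \<noteq> None \<and>
     (\<exists>R. run k N Rs (filter (\<lambda>x. e < x) (a # \<beta>)) = Some R \<and> e \<notin> R)"
      then have H1: "run k (e-1) L (a # ?fl) \<noteq> None" and H2: "\<exists>R. run k N Rs ?fr = Some R \<and> e \<notin> R"
        using FL FR by simp_all
      from H1 obtain s where s': "park_step k (e-1) L a = Some s"
        and r: "run k (e-1) (insert s L) ?fl \<noteq> None"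
        by (cases "park_step k (e-1) L a") simp_all
      have s: "park_step k N (L \<union> Rs) a = Some s"
        using ps_left[OF Cons.prems(1,2) a(1) lt Cons.prems(4)] s' by blast
      have "s \<le> e - 1" using ps_range[OF s'] a lt by simp
      then have L': "insert s L \<subseteq> {..<e}" using Cons.prems(1) lt by auto
      have E: "insert s (L \<union> Rs) = insert s L \<union> Rs" by blast
      have "\<exists>F. run k N (insert s L \<union> Rs) \<beta> = Some F \<and> e \<notin> F"
        by (rule iffD2[OF Cons.IH[OF L' Cons.prems(2) bs Cons.prems(4)]]) (use r H2 in blast)
      then show "\<exists>F. run k N (L \<union> Rs) (a # \<beta>) = Some F \<and> e \<notin> F" using s by simp
    qed
  next
    case False
    then have gt: "e < a" using a by auto
    have FL: "filter (\<lambda>x. x < e) (a # \<beta>) = ?fl" using gt by simp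
    have FR: "filter (\<lambda>x. e < x) (a # \<beta>) = a # ?fr" using gt by simp
    have eR: "e \<notin> Rs" using Cons.prems(2) by auto
    have PS: "park_step k N (L \<union> Rs) a = park_step k N Rs a" by (rule ps_right[OF Cons.prems(1) eR gt])
    show ?thesis
    proof
      assume "\<exists>F. run k N (L \<union> Rs) (a # \<beta>) = Some F \<and> e \<notin> F"
      then obtain F where F: "run k N (L \<union> Rs) (a # \<beta>) = Some F" and eF: "e \<notin> F" by blast
      then obtain s where s: "park_step k N (L \<union> Rs) a = Some s"
        and r: "run k N (insert s (L \<union> Rs)) \<beta> = Some F"
        by (cases "park_step k N (L \<union> Rs) a") simp_all
      have "s \<noteq> e" using run_mono[OF r] eF by blast
      moreover have s': "park_step k N Rs a = Some s" using s PS by simp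
      moreover have "e \<le> s" by (rule ps_geq[OF eR gt s'])
      ultimately have R': "insert s Rs \<subseteq> {e<..}" using Cons.prems(2) by auto
      have E: "insert s (L \<union> Rs) = L \<union> insert s Rs" by blast
      have "\<exists>F. run k N (L \<union> insert s Rs) \<beta> = Some F \<and> e \<notin> F" using r eF unfolding E by blast
      from iffD1[OF Cons.IH[OF Cons.prems(1) R' bs Cons.prems(4)] this]
      have IH: "run k (e-1) L ?fl \<noteq> None \<and> (\<exists>R. run k N (insert s Rs) ?fr = Some R \<and> e \<notin> R)" .
      have "run k N Rs (a # ?fr) = run k N (insert s Rs) ?fr" using s' by simp
      then show "run k (e-1) L (filter (\<lambda>x. x < e) (a # \<beta>)) \<noteq> None \<and>
     (\<exists>R. run k N Rs (filter (\<lambda>x. e < x) (a # \<beta>)) = Some R \<and> e \<notin> R)"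
        using IH FL FR by simp
    next
      assume H: "run k (e-1) L (filter (\<lambda>x. x < e) (a # \<beta>)) \<noteq> None \<and>
     (\<exists>R. run k N Rs (filter (\<lambda>x. e < x) (a # \<beta>)) = Some R \<and> e \<notin> R)"
      then have H1: "run k (e-1) L ?fl \<noteq> None" and H2: "\<exists>R. run k N Rs (a # ?fr) = Some R \<and> e \<notin> R"
        using FL FR by simp_all
      from H2 obtain R where R: "run k N Rs (a # ?fr) = Some R" and eR': "e \<notin> R" by blast
      then obtain s where s': "park_step k N Rs a = Some s"
        and r: "run k N (insert s Rs) ?fr = Some R"
        by (cases "park_step k N Rs a") simp_all
      have "s \<noteq> e" using run_mono[OF r] eR' by blast
      moreover have "e \<le> s" by (rule ps_geq[OF eR gt s'])
      ultimately have R': "insert s Rs \<subseteq> {e<..}" using Cons.prems(2) by auto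
      have E: "insert s (L \<union> Rs) = L \<union> insert s Rs" by blast
      have "\<exists>F. run k N (L \<union> insert s Rs) \<beta> = Some F \<and> e \<notin> F"
        by (rule iffD2[OF Cons.IH[OF Cons.prems(1) R' bs Cons.prems(4)]]) (use r eR' H1 in blast)
      moreover have "park_step k N (L \<union> Rs) a = Some s" using s' PS by simp
      ultimately show "\<exists>F. run k N (L \<union> Rs) (a # \<beta>) = Some F \<and> e \<notin> F" by simp
    qed
  qed
qed

definition off :: "nat \<Rightarrow> (int \<Rightarrow> bool) \<Rightarrow> int" where
  "off k f = (if \<not> f 0 then 0
     else if (\<exists>j::nat. 1 \<le> j \<and> j \<le> k \<and> \<not> f (- int j))
       then - int (LEAST j::nat. 1 \<le> j \<and> j \<le> k \<and> \<not> f (- int j))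
     else int (LEAST j::nat. 1 \<le> j \<and> \<not> f (int j)))"

definition cstep :: "nat \<Rightarrow> int \<Rightarrow> int set \<Rightarrow> int \<Rightarrow> int" where
  "cstep k M occ p = (p + off k (\<lambda>j. (p + j) mod M \<in> occ)) mod M"

fun crun :: "nat \<Rightarrow> int \<Rightarrow> int set \<Rightarrow> int list \<Rightarrow> int set" where
  "crun k M occ [] = occ"
| "crun k M occ (p # ps) = crun k M (insert (cstep k M occ p) occ) ps"

definition rot :: "int \<Rightarrow> int \<Rightarrow> int set \<Rightarrow> int set" where
  "rot M t A = {y. 0 \<le> y \<and> y < M \<and> (y - t) mod M \<in> A}"

lemma cstep_rot:
  assumes "M > 0"
  shows "cstep k M (rot M t occ) ((p + t) mod M) = (cstep k M occ p + t) mod M"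
proof -
  have "(\<lambda>j. ((p + t) mod M + j) mod M \<in> rot M t occ) = (\<lambda>j. (p + j) mod M \<in> occ)"
  proof
    fix j
    have "(((p + t) mod M + j) mod M - t) mod M = (p + j) mod M"
      by (metis add.commute add_diff_cancel_left' mod_add_left_eq mod_diff_left_eq add.left_commute)
    then show "(((p + t) mod M + j) mod M \<in> rot M t occ) = ((p + j) mod M \<in> occ)"
      using assms unfolding rot_def by simp
  qed
  then show ?thesis unfolding cstep_def
    by (simp add: mod_add_left_eq algebra_simps) (metis mod_add_left_eq add.commute add.left_commute)
qed

lemma cstep_range: "M > 0 \<Longrightarrow> 0 \<le> cstep k M occ p \<and> cstep k M occ p < M"
  unfolding cstep_def by simp

lemma rot_insert:
  assumes "M > 0" "0 \<le> x" "x < M"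
  shows "rot M t (insert x A) = insert ((x + t) mod M) (rot M t A)"
proof -
  have eq: "((y - t) mod M = x) \<longleftrightarrow> y = (x + t) mod M" if "0 \<le> y" "y < M" for y
  proof
    assume "(y - t) mod M = x"
    then have "(x + t) mod M = ((y - t) mod M + t) mod M" by simp
    also have "\<dots> = y mod M" by (simp add: mod_add_left_eq)
    also have "\<dots> = y" using that by simp
    finally show "y = (x + t) mod M" by simp
  next
    assume "y = (x + t) mod M"
    then have "(y - t) mod M = ((x + t) mod M - t) mod M" by simp
    also have "\<dots> = x mod M" by (simp add: mod_diff_left_eq)
    also have "\<dots> = x" using assms by simp
    finally show "(y - t) mod M = x" .
  qed
  show ?thesis
    unfolding rot_def using eq assms by auto
qed

lemma crun_rot:
  assumes "M > 0"
  shows "crun k M (rot M t occ) (map (\<lambda>p. (p + t) mod M) ps) = rot M t (crun k M occ ps)"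
  using assms
proof (induction ps arbitrary: occ)
  case Nil then show ?case by simp
next
  case (Cons p ps)
  have "insert (cstep k M (rot M t occ) ((p + t) mod M)) (rot M t occ) =
        rot M t (insert (cstep k M occ p) occ)"
    using rot_insert[OF assms, of "cstep k M occ p" t occ] cstep_range[OF assms, of k occ p]
      cstep_rot[OF assms] by simp
  then show ?case using Cons by simp
qed

lemma rot_empty: "rot M t {} = {}" unfolding rot_def by simp

lemma mem_rot_self: "M > 0 \<Longrightarrow> 0 \<le> t \<Longrightarrow> t < M \<Longrightarrow> t \<in> rot M t A \<longleftrightarrow> 0 \<in> A"
  unfolding rot_def by simp

lemma off_cases:
  obtains (c0) "\<not> f 0" "off k f = 0"
  | (cb) j0 where "f 0" "1 \<le> j0" "j0 \<le> k" "\<not> f (- int j0)" "\<And>j. 1 \<le> j \<Longrightarrow> j < j0 \<Longrightarrow> f (- int j)"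
      "off k f = - int j0"
  | (cf) "f 0" "\<And>j. 1 \<le> j \<Longrightarrow> j \<le> k \<Longrightarrow> f (- int j)"
      "off k f = int (LEAST j::nat. 1 \<le> j \<and> \<not> f (int j))"
proof (cases "f 0")
  case False then show ?thesis using c0 unfolding off_def by simp
next
  case T: True
  show ?thesis
  proof (cases "\<exists>j::nat. 1 \<le> j \<and> j \<le> k \<and> \<not> f (- int j)")
    case True
    define j0 where "j0 = (LEAST j::nat. 1 \<le> j \<and> j \<le> k \<and> \<not> f (- int j))"
    have P: "1 \<le> j0 \<and> j0 \<le> k \<and> \<not> f (- int j0)"
      unfolding j0_def by (rule LeastI_ex) (rule True)
    have Q: "f (- int j)" if "1 \<le> j" "j < j0" for j
      using not_less_Least[of j "\<lambda>j. 1 \<le> j \<and> j \<le> k \<and> \<not> f (- int j)"] that P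
      unfolding j0_def[symmetric] by auto
    have "off k f = - int j0" unfolding off_def j0_def using T True by simp
    then show ?thesis using cb[of j0] P Q T by blast
  next
    case False
    have A: "\<not> \<not> f 0" using T by simp
    have "off k f = int (LEAST j::nat. 1 \<le> j \<and> \<not> f (int j))" unfolding off_def
      by (simp only: if_not_P[OF A] if_not_P[OF False])
    then show ?thesis using cf T False by blast
  qed
qed

lemma least_fwd:
  assumes "1 \<le> c" "\<not> f (int c)"
  shows "1 \<le> (LEAST j::nat. 1 \<le> j \<and> \<not> f (int j)) \<and> \<not> f (int (LEAST j::nat. 1 \<le> j \<and> \<not> f (int j)))
     \<and> (LEAST j::nat. 1 \<le> j \<and> \<not> f (int j)) \<le> c
     \<and> (\<forall>j. 1 \<le> j \<and> j < (LEAST j::nat. 1 \<le> j \<and> \<not> f (int j)) \<longrightarrow> f (int j))"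
proof -
  have ex: "\<exists>j::nat. 1 \<le> j \<and> \<not> f (int j)" using assms by blast
  show ?thesis
    using LeastI_ex[OF ex] Least_le[of "\<lambda>j::nat. 1 \<le> j \<and> \<not> f (int j)" c, OF conjI[OF assms]]
      not_less_Least[of _ "\<lambda>j::nat. 1 \<le> j \<and> \<not> f (int j)"] by blast
qed

lemma cstep_notin:
  assumes M: "M > 0" and x: "0 \<le> x" "x < M" "x \<notin> occ" and p: "0 \<le> p" "p < M"
  shows "cstep k M occ p \<notin> occ"
proof -
  define f where "f = (\<lambda>j. (p + j) mod M \<in> occ)"
  have cs: "cstep k M occ p = (p + off k f) mod M" unfolding cstep_def f_def by simp
  show ?thesis
  proof (cases rule: off_cases[of f k])
    case c0 then show ?thesis using cs p unfolding f_def by simp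
  next
    case (cb j0) then show ?thesis using cs unfolding f_def by simp
  next
    case cf
    define c where "c = nat ((x - p) mod M) + nat M"
    have c1: "1 \<le> c" using M unfolding c_def by simp
    have "(p + int c) mod M = ((p + (x - p) mod M) + M) mod M" unfolding c_def using M by (simp add: algebra_simps)
    also have "\<dots> = (p + (x - p) mod M) mod M" by (rule mod_add_self2)
    also have "\<dots> = (p + (x - p)) mod M" by (rule mod_add_right_eq)
    also have "\<dots> = x" using x by simp
    finally have "\<not> f (int c)" unfolding f_def using x by simp
    from least_fwd[of c f, OF c1 this] cf cs show ?thesis unfolding f_def by simp
  qed
qed

lemma crun_props:
  assumes "M > 0" "finite occ" "occ \<subseteq> {0..<M}" "set ps \<subseteq> {0..<M}" "card occ + length ps \<le> nat M"
  shows "crun k M occ ps \<subseteq> {0..<M} \<and> finite (crun k M occ ps) \<and> card (crun k M occ ps) = card occ + length ps"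
  using assms(2-5)
proof (induction ps arbitrary: occ)
  case Nil then show ?case by simp
next
  case (Cons p ps)
  have "card occ < card {0..<M}" using Cons.prems(4) assms(1) by simp
  then have "\<not> {0..<M} \<subseteq> occ" using card_mono[OF Cons.prems(1)] by (meson not_le)
  then obtain x where "x \<in> {0..<M}" "x \<notin> occ" by blast
  then have x: "0 \<le> x" "x < M" "x \<notin> occ" by auto
  have p: "0 \<le> p" "p < M" using Cons.prems(3) by auto
  have ni: "cstep k M occ p \<notin> occ" by (rule cstep_notin[OF assms(1) x p])
  have rg: "0 \<le> cstep k M occ p \<and> cstep k M occ p < M" by (rule cstep_range[OF assms(1)])
  have "crun k M (insert (cstep k M occ p) occ) ps \<subseteq> {0..<M} \<and> finite (crun k M (insert (cstep k M occ p) occ) ps) \<and>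
    card (crun k M (insert (cstep k M occ p) occ) ps) = card (insert (cstep k M occ p) occ) + length ps"
    by (rule Cons.IH) (use Cons.prems ni rg in auto)
  then show ?case using ni Cons.prems(1) by simp
qed

lemma crun_mono: "occ \<subseteq> crun k M occ ps"
  by (induction ps arbitrary: occ) (auto, blast)

lemma cstep_self:
  assumes "M > 0" "0 \<le> p" "p < M" "p \<notin> occ"
  shows "cstep k M occ p = p"
proof -
  have "off k (\<lambda>j. (p + j) mod M \<in> occ) = 0" unfolding off_def using assms by simp
  then show ?thesis unfolding cstep_def using assms by simp
qed

lemma crun_set:
  assumes "M > 0" "set ps \<subseteq> {0..<M}"
  shows "set ps \<subseteq> crun k M occ ps"
  using assms(2)
proof (induction ps arbitrary: occ)
  case Nil then show ?case by simp
next
  case (Cons p ps)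
  have "p \<in> insert (cstep k M occ p) occ"
    using cstep_self[OF assms(1), of p occ k] Cons.prems by (cases "p \<in> occ") auto
  then show ?case using Cons crun_mono[of "insert (cstep k M occ p) occ" k M ps] by auto
qed

lemma card_filter_sum: "finite A \<Longrightarrow> card {x \<in> A. P x} = (\<Sum>x\<in>A. if P x then 1 else 0)"
  by (simp add: sum.If_cases Int_def)

lemma circle_count:
  fixes m :: nat
  defines "M \<equiv> int m + 1"
  shows "card {ps. set ps \<subseteq> {0..<M} \<and> length ps = m \<and> 0 \<notin> crun k M {} ps} = (m + 1) ^ (m - 1)"
proof -
  have M0: "M > 0" unfolding M_def by simp
  define U where "U = {ps. set ps \<subseteq> {0..<M} \<and> length ps = m}"
  define Z where "Z t = {ps \<in> U. t \<notin> crun k M {} ps}" for t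
  have finU: "finite U" unfolding U_def by (rule finite_lists_length_eq) simp
  have nM: "nat M = m + 1" unfolding M_def by (simp add: nat_add_distrib)
  have cardU: "card U = (m + 1) ^ m" unfolding U_def using card_lists_length_eq[of "{0..<M}" m] nM
    by simp
  have CU: "crun k M {} ps \<subseteq> {0..<M} \<and> finite (crun k M {} ps) \<and> card (crun k M {} ps) = m" if "ps \<in> U" for ps
    using crun_props[OF M0, of "{}" ps k] that nM unfolding U_def by simp
  have Zt: "card (Z t) = card (Z 0)" if t: "0 \<le> t" "t < M" for t
  proof -
    let ?f = "\<lambda>p. (p + t) mod M"
    have inj: "inj_on (map ?f) (Z 0)"
    proof (rule inj_onI)
      fix xs ys assume xs: "xs \<in> Z 0" and ys: "ys \<in> Z 0" and eq: "map ?f xs = map ?f ys"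
      have "inj_on ?f (set xs \<union> set ys)"
      proof (rule inj_onI)
        fix a b assume a: "a \<in> set xs \<union> set ys" and b: "b \<in> set xs \<union> set ys" and "?f a = ?f b"
        then have "((a + t) mod M - t) mod M = ((b + t) mod M - t) mod M" by simp
        then have "a mod M = b mod M" by (simp add: mod_diff_left_eq)
        moreover have "0 \<le> a" "a < M" "0 \<le> b" "b < M" using a b xs ys unfolding Z_def U_def by auto
        ultimately show "a = b" by simp
      qed
      then show "xs = ys" using map_inj_on[OF eq] by blast
    qed
    have img: "map ?f ` Z 0 = Z t"
    proof
      show "map ?f ` Z 0 \<subseteq> Z t"
      proof
        fix qs assume "qs \<in> map ?f ` Z 0"
        then obtain ps where ps: "ps \<in> Z 0" and qs: "qs = map ?f ps" by blast
        have "crun k M {} qs = rot M t (crun k M {} ps)"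
          using crun_rot[OF M0, of k t "{}" ps] unfolding qs rot_empty by simp
        then have "t \<notin> crun k M {} qs" using mem_rot_self[OF M0 t] ps unfolding Z_def by simp
        moreover have "qs \<in> U" using ps M0 unfolding qs Z_def U_def by auto
        ultimately show "qs \<in> Z t" unfolding Z_def by simp
      qed
    next
      show "Z t \<subseteq> map ?f ` Z 0"
      proof
        fix qs assume qs: "qs \<in> Z t"
        define ps where "ps = map (\<lambda>q. (q - t) mod M) qs"
        have "map ?f ps = map (\<lambda>q. q mod M) qs" unfolding ps_def by (simp add: mod_add_left_eq)
        also have "\<dots> = qs" using qs unfolding Z_def U_def by (intro map_idI) auto
        finally have e: "map ?f ps = qs" .
        have "crun k M {} qs = rot M t (crun k M {} ps)"
          using crun_rot[OF M0, of k t "{}" ps] unfolding e rot_empty by simp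
        then have "0 \<notin> crun k M {} ps" using mem_rot_self[OF M0 t] qs unfolding Z_def by simp
        moreover have "ps \<in> U" using qs M0 unfolding ps_def Z_def U_def by auto
        ultimately have "ps \<in> Z 0" unfolding Z_def by simp
        then show "qs \<in> map ?f ` Z 0" using e by blast
      qed
    qed
    show ?thesis using card_image[OF inj] img by simp
  qed
  have "(\<Sum>t\<in>{0..<M}. card (Z t)) = (\<Sum>t\<in>{0..<M}. \<Sum>ps\<in>U. if t \<notin> crun k M {} ps then 1 else 0)"
    unfolding Z_def using card_filter_sum[OF finU] by simp
  also have "\<dots> = (\<Sum>ps\<in>U. \<Sum>t\<in>{0..<M}. if t \<notin> crun k M {} ps then 1 else 0)"
    by (rule sum.swap)
  also have "\<dots> = (\<Sum>ps\<in>U. 1)"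
  proof (rule sum.cong)
    fix ps assume ps: "ps \<in> U"
    have "(\<Sum>t\<in>{0..<M}. if t \<notin> crun k M {} ps then 1 else (0::nat)) = card {t \<in> {0..<M}. t \<notin> crun k M {} ps}"
      using card_filter_sum[of "{0..<M}" "\<lambda>t. t \<notin> crun k M {} ps"] by simp
    also have "{t \<in> {0..<M}. t \<notin> crun k M {} ps} = {0..<M} - crun k M {} ps" by auto
    also have "card \<dots> = card {0..<M} - card (crun k M {} ps)"
      using CU[OF ps] by (simp add: card_Diff_subset)
    also have "\<dots> = 1" using CU[OF ps] nM by simp
    finally show "(\<Sum>t\<in>{0..<M}. if t \<notin> crun k M {} ps then 1 else 0) = (1::nat)" .
  qed simp
  also have "\<dots> = (m + 1) ^ m" using cardU by simp
  finally have S: "(\<Sum>t\<in>{0..<M}. card (Z t)) = (m + 1) ^ m" .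
  have "(\<Sum>t\<in>{0..<M}. card (Z t)) = (\<Sum>t\<in>{0..<M}. card (Z 0))" by (rule sum.cong) (auto intro: Zt)
  also have "\<dots> = (m + 1) * card (Z 0)" using nM by simp
  finally have "(m + 1) * card (Z 0) = (m + 1) ^ m" using S by simp
  then have eq: "(m + 1) * card (Z 0) = (m + 1) * (m + 1) ^ (m - 1)"
    by (cases m) auto
  then have "card (Z 0) = (m + 1) ^ (m - 1)"
    using mult_left_cancel[of "m + 1" "card (Z 0)" "(m + 1) ^ (m - 1)"] by simp
  moreover have "Z 0 = {ps. set ps \<subseteq> {0..<M} \<and> length ps = m \<and> 0 \<notin> crun k M {} ps}"
    unfolding Z_def U_def by auto
  ultimately show ?thesis by simp
qed

lemma SL:
  fixes Ol :: "nat set" and a e m N k :: nat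
  defines "M \<equiv> int m + 1"
  assumes N: "N = e + m" and e1: "1 \<le> e" and Ol: "Ol \<subseteq> {e<..N}" and a: "e < a" "a \<le> N"
  defines "c \<equiv> cstep k M ((\<lambda>s. int (s - e)) ` Ol) (int (a - e))"
  shows "(c \<noteq> 0 \<longrightarrow> park_step k N Ol a = Some (nat c + e)) \<and>
         (c = 0 \<longrightarrow> park_step k N Ol a = None \<or> park_step k N Ol a = Some e)"
proof -
  define Oc where "Oc = (\<lambda>s. int (s - e)) ` Ol"
  define d where "d = a - e"
  have d: "1 \<le> d" "d \<le> m" "a = e + d" using a N unfolding d_def by auto
  have M0: "M > 0" unfolding M_def by simp
  have memL: "s \<in> Ol \<longleftrightarrow> int (s - e) \<in> Oc" if "e < s" for s
  proof
    assume "s \<in> Ol" then show "int (s - e) \<in> Oc" unfolding Oc_def by blast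
  next
    assume "int (s - e) \<in> Oc"
    then obtain s' where "s' \<in> Ol" "int (s - e) = int (s' - e)" unfolding Oc_def by blast
    moreover have "e < s'" using \<open>s' \<in> Ol\<close> Ol by auto
    ultimately show "s \<in> Ol" using that by simp
  qed
  have z: "0 \<notin> Oc" using Ol unfolding Oc_def by auto
  define f where "f = (\<lambda>j. (int d + j) mod M \<in> Oc)"
  have cdef: "c = (int d + off k f) mod M" unfolding c_def cstep_def f_def Oc_def d_def by simp
  have fneg: "f (- int j) \<longleftrightarrow> a - j \<in> Ol" if "j < d" for j
  proof -
    have "(int d + - int j) mod M = int (d - j)" using that d unfolding M_def by simp
    moreover have "a - j - e = d - j" "e < a - j" using that d by auto
    ultimately show ?thesis unfolding f_def using memL[of "a - j"] by simp
  qed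
  have fwall: "\<not> f (- int d)" unfolding f_def using z by simp
  have fpos: "f (int j) \<longleftrightarrow> a + j \<in> Ol" if "1 \<le> j" "d + j \<le> m" for j
  proof -
    have "(int d + int j) mod M = int (d + j)" using that d unfolding M_def by simp
    moreover have "a + j - e = d + j" "e < a + j" using that d by auto
    ultimately show ?thesis unfolding f_def using memL[of "a + j"] by simp
  qed
  have fwall2: "\<not> f (int (m + 1 - d))"
  proof -
    have "int d + int (m + 1 - d) = M" using d unfolding M_def by simp
    then have "(int d + int (m + 1 - d)) mod M = 0" by simp
    then show ?thesis unfolding f_def using z by simp
  qed
  show ?thesis
  proof (cases rule: off_cases[of f k])
    case c0
    have "f 0 \<longleftrightarrow> a \<in> Ol"
    proof -
      have "(int d + 0) mod M = int (a - e)" using d unfolding M_def d_def by simp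
      then show ?thesis unfolding f_def using memL[of a] a by simp
    qed
    then have "a \<notin> Ol" using c0 by simp
    moreover have "c = int d" using cdef c0 d unfolding M_def by simp
    ultimately show ?thesis using ps_free[of a Ol k N] d by simp
  next
    case (cb j0)
    have af: "a \<in> Ol" using fneg[of 0] cb(1) d by simp
    have j0d: "j0 \<le> d"
    proof (rule ccontr)
      assume "\<not> j0 \<le> d"
      then have "f (- int d)" using cb(5)[of d] d by simp
      then show False using fwall by simp
    qed
    have bk: "a - j \<in> Ol" if "1 \<le> j" "j < j0" for j
      using fneg[of j] cb(5)[OF that] that j0d by simp
    show ?thesis
    proof (cases "j0 = d")
      case True
      have "c = 0" using cdef cb(6) True by simp
      moreover have "park_step k N Ol a = Some (a - j0)"
        by (rule ps_back[OF af cb(2) cb(3)]) (use True d e1 bk Ol in auto)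
      ultimately show ?thesis using True d by simp
    next
      case False
      then have lt: "j0 < d" using j0d by simp
      have "c = int (d - j0)" using cdef cb(6) lt d unfolding M_def by simp
      moreover have nf: "a - j0 \<notin> Ol" using fneg[OF lt] cb(4) by simp
      have "park_step k N Ol a = Some (a - j0)"
        by (rule ps_back[OF af cb(2) cb(3) _ nf bk]) (use lt d in auto)
      ultimately show ?thesis using lt d cb(2) by auto
    qed
  next
    case cf
    have af: "a \<in> Ol" using fneg[of 0] cf(1) d by simp
    have kd: "k < d"
    proof (rule ccontr)
      assume "\<not> k < d"
      then have "f (- int d)" using cf(2)[of d] d by simp
      then show False using fwall by simp
    qed
    have bk: "a - j \<in> Ol" if "1 \<le> j" "j \<le> k" "j < a" for j
      using fneg[of j] cf(2)[OF that(1,2)] that kd by simp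
    define L where "L = (LEAST j::nat. 1 \<le> j \<and> \<not> f (int j))"
    have c1: "1 \<le> m + 1 - d" using d by simp
    from least_fwd[of "m + 1 - d" f, OF c1 fwall2]
    have LL: "1 \<le> L" "\<not> f (int L)" "L \<le> m + 1 - d" "\<And>j. 1 \<le> j \<Longrightarrow> j < L \<Longrightarrow> f (int j)"
      unfolding L_def by auto
    have offL: "off k f = int L" using cf(3) unfolding L_def by simp
    show ?thesis
    proof (cases "L = m + 1 - d")
      case True
      have "int d + off k f = M" using offL True d unfolding M_def by simp
      then have "c = 0" using cdef by simp
      moreover have "park_step k N Ol a = None"
      proof (rule ps_none[OF af bk])
        fix s' assume s': "a < s'" "s' \<le> N"
        define j where "j = s' - a"
        have "1 \<le> j" "j < L" "d + j \<le> m" "s' = a + j" using s' True d N unfolding j_def by auto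
        then show "s' \<in> Ol" using fpos LL(4) by metis
      qed
      ultimately show ?thesis by simp
    next
      case False
      then have Lm: "d + L \<le> m" using LL(3) d by simp
      have "c = int (d + L)" using cdef offL Lm d unfolding M_def by simp
      moreover have "park_step k N Ol a = Some (a + L)"
      proof (rule ps_fwd[OF af bk])
        show "a < a + L" "a + L \<le> N" using LL(1) Lm d N by auto
        show "a + L \<notin> Ol" using fpos[OF LL(1) Lm] LL(2) by simp
        fix s' assume s': "a < s'" "s' < a + L"
        define j where "j = s' - a"
        have "1 \<le> j" "j < L" "d + j \<le> m" "s' = a + j" using s' Lm unfolding j_def by auto
        then show "s' \<in> Ol" using fpos LL(4) by metis
      qed
      ultimately show ?thesis using d LL(1) by auto
    qed
  qed
qed

lemma run_circ:
  fixes e m N k :: nat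
  defines "M \<equiv> int m + 1"
  assumes N: "N = e + m" and e1: "1 \<le> e" and Ol: "Ol \<subseteq> {e<..N}" and g: "set \<gamma> \<subseteq> {e<..N}"
  shows "(\<exists>R. run k N Ol \<gamma> = Some R \<and> e \<notin> R) \<longleftrightarrow>
         0 \<notin> crun k M ((\<lambda>s. int (s - e)) ` Ol) (map (\<lambda>s. int (s - e)) \<gamma>)"
  using Ol g
proof (induction \<gamma> arbitrary: Ol)
  case Nil then show ?case by auto
next
  case (Cons a \<gamma>)
  let ?\<phi> = "\<lambda>s::nat. int (s - e)"
  define c where "c = cstep k M (?\<phi> ` Ol) (?\<phi> a)"
  have a: "e < a" "a \<le> N" using Cons.prems by auto
  have gs: "set \<gamma> \<subseteq> {e<..N}" using Cons.prems by auto
  have S: "(c \<noteq> 0 \<longrightarrow> park_step k N Ol a = Some (nat c + e)) \<and>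
         (c = 0 \<longrightarrow> park_step k N Ol a = None \<or> park_step k N Ol a = Some e)"
    using SL[OF N e1 Cons.prems(1) a, of k] unfolding c_def M_def by simp
  have crg: "0 \<le> c \<and> c < M" unfolding c_def by (rule cstep_range) (simp add: M_def)
  have R: "crun k M (?\<phi> ` Ol) (map ?\<phi> (a # \<gamma>)) = crun k M (insert c (?\<phi> ` Ol)) (map ?\<phi> \<gamma>)"
    unfolding c_def by simp
  show ?case
  proof (cases "c = 0")
    case True
    have "\<not> (\<exists>R. run k N Ol (a # \<gamma>) = Some R \<and> e \<notin> R)"
    proof
      assume "\<exists>R. run k N Ol (a # \<gamma>) = Some R \<and> e \<notin> R"
      then obtain R where r: "run k N Ol (a # \<gamma>) = Some R" and eR: "e \<notin> R" by blast
      show False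
      proof (cases "park_step k N Ol a")
        case None then show ?thesis using r by simp
      next
        case (Some s)
        then have "s = e" using S True by simp
        then have "run k N (insert e Ol) \<gamma> = Some R" using r Some by simp
        then show ?thesis using run_mono eR by blast
      qed
    qed
    moreover have "0 \<in> crun k M (insert c (?\<phi> ` Ol)) (map ?\<phi> \<gamma>)"
      using crun_mono True by blast
    ultimately show ?thesis using R by simp
  next
    case False
    define s where "s = nat c + e"
    have ps: "park_step k N Ol a = Some s" using S False unfolding s_def by simp
    have c1: "1 \<le> c" "c \<le> int m" using crg False unfolding M_def by auto
    have s: "e < s" "s \<le> N" using c1 N unfolding s_def by auto
    have phis: "?\<phi> s = c" using c1 unfolding s_def by simp
    have ins: "insert c (?\<phi> ` Ol) = ?\<phi> ` insert s Ol" using phis by simp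
    have Ol': "insert s Ol \<subseteq> {e<..N}" using s Cons.prems(1) by auto
    have "(\<exists>R. run k N Ol (a # \<gamma>) = Some R \<and> e \<notin> R) \<longleftrightarrow> (\<exists>R. run k N (insert s Ol) \<gamma> = Some R \<and> e \<notin> R)"
      using ps by simp
    also have "\<dots> \<longleftrightarrow> 0 \<notin> crun k M (?\<phi> ` insert s Ol) (map ?\<phi> \<gamma>)"
      by (rule Cons.IH[OF Ol' gs])
    finally show ?thesis using R ins by simp
  qed
qed

definition Rset :: "nat \<Rightarrow> nat \<Rightarrow> nat \<Rightarrow> nat list set" where
  "Rset k e N = {\<gamma>. length \<gamma> = N - e \<and> set \<gamma> \<subseteq> {e<..N} \<and> (\<exists>R. run k N {} \<gamma> = Some R \<and> e \<notin> R)}"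

lemma card_Rset:
  assumes "1 \<le> e" "e \<le> N"
  shows "card (Rset k e N) = (N - e + 1) ^ (N - e - 1)"
proof -
  define m where "m = N - e"
  define M where "M = int m + 1"
  have N: "N = e + m" using assms unfolding m_def by simp
  let ?\<phi> = "\<lambda>s::nat. int (s - e)"
  define Z where "Z = {ps. set ps \<subseteq> {0..<M} \<and> length ps = m \<and> 0 \<notin> crun k M {} ps}"
  have RC: "(\<exists>R. run k N {} \<gamma> = Some R \<and> e \<notin> R) \<longleftrightarrow> 0 \<notin> crun k M {} (map ?\<phi> \<gamma>)"
    if "set \<gamma> \<subseteq> {e<..N}" for \<gamma>
    using run_circ[OF N assms(1) _ that, of "{}" k] unfolding M_def by simp
  have inj: "inj_on (map ?\<phi>) (Rset k e N)"
  proof (rule inj_onI)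
    fix xs ys assume xs: "xs \<in> Rset k e N" and ys: "ys \<in> Rset k e N" and eq: "map ?\<phi> xs = map ?\<phi> ys"
    have sub: "set xs \<union> set ys \<subseteq> {e<..N}" using xs ys unfolding Rset_def by auto
    have "inj_on ?\<phi> (set xs \<union> set ys)"
    proof (rule inj_onI)
      fix x y assume x: "x \<in> set xs \<union> set ys" and y: "y \<in> set xs \<union> set ys" and "?\<phi> x = ?\<phi> y"
      moreover have "e < x" "e < y" using x y sub by auto
      ultimately show "x = y" by simp
    qed
    then show "xs = ys" using map_inj_on[OF eq] by blast
  qed
  have img: "map ?\<phi> ` Rset k e N = Z"
  proof
    show "map ?\<phi> ` Rset k e N \<subseteq> Z"
    proof
      fix ps assume "ps \<in> map ?\<phi> ` Rset k e N"
      then obtain \<gamma> where g: "\<gamma> \<in> Rset k e N" and ps: "ps = map ?\<phi> \<gamma>" by blast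
      have "set \<gamma> \<subseteq> {e<..N}" using g unfolding Rset_def by simp
      then have "0 \<notin> crun k M {} ps" "set ps \<subseteq> {0..<M}" using RC g N unfolding ps Rset_def M_def by auto
      moreover have "length ps = m" using g unfolding ps Rset_def m_def by simp
      ultimately show "ps \<in> Z" unfolding Z_def by simp
    qed
  next
    show "Z \<subseteq> map ?\<phi> ` Rset k e N"
    proof
      fix ps assume ps: "ps \<in> Z"
      have M0: "M > 0" unfolding M_def by simp
      have "set ps \<subseteq> crun k M {} ps" by (rule crun_set[OF M0]) (use ps in \<open>simp add: Z_def\<close>)
      then have nz: "0 \<notin> set ps" using ps unfolding Z_def by auto
      have rg: "1 \<le> t \<and> t \<le> int m" if "t \<in> set ps" for t
      proof -
        have "t \<in> {0..<M}" using ps that unfolding Z_def by auto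
        moreover have "t \<noteq> 0" using nz that by auto
        ultimately show ?thesis unfolding M_def by auto
      qed
      define \<gamma> where "\<gamma> = map (\<lambda>t. nat t + e) ps"
      have "map ?\<phi> \<gamma> = map (\<lambda>t. t) ps" unfolding \<gamma>_def map_map
      proof (rule map_cong[OF refl])
        fix t assume "t \<in> set ps"
        then show "(?\<phi> \<circ> (\<lambda>t. nat t + e)) t = t" using rg[of t] by simp
      qed
      then have e1: "map ?\<phi> \<gamma> = ps" by simp
      have gs: "set \<gamma> \<subseteq> {e<..N}"
      proof
        fix x assume "x \<in> set \<gamma>"
        then obtain t where t: "t \<in> set ps" "x = nat t + e" unfolding \<gamma>_def by auto
        then show "x \<in> {e<..N}" using rg[OF t(1)] N by auto
      qed
      have len: "length \<gamma> = N - e" using ps unfolding \<gamma>_def Z_def m_def by simp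
      have "0 \<notin> crun k M {} (map ?\<phi> \<gamma>)" using ps e1 unfolding Z_def by simp
      then have "\<exists>R. run k N {} \<gamma> = Some R \<and> e \<notin> R" using RC[OF gs] by blast
      then have "\<gamma> \<in> Rset k e N" unfolding Rset_def using gs len by blast
      then show "ps \<in> map ?\<phi> ` Rset k e N" using e1 by blast
    qed
  qed
  have "card (Rset k e N) = card Z" using card_image[OF inj] img by simp
  also have "\<dots> = (m + 1) ^ (m - 1)" unfolding Z_def M_def by (rule circle_count)
  finally show ?thesis unfolding m_def .
qed

lemma run_right_range:
  assumes "Rs \<subseteq> {e<..N}" "set \<gamma> \<subseteq> {e<..N}" "run k N Rs \<gamma> = Some R" "e \<notin> R"
  shows "R \<subseteq> {e<..N}"
  using assms
proof (induction \<gamma> arbitrary: Rs)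
  case Nil then show ?case by simp
next
  case (Cons a \<gamma>)
  obtain s where s: "park_step k N Rs a = Some s" and r: "run k N (insert s Rs) \<gamma> = Some R"
    using Cons.prems(3) by (cases "park_step k N Rs a") simp_all
  have a: "e < a" "a \<le> N" using Cons.prems(2) by auto
  have "s \<noteq> e" using run_mono[OF r] Cons.prems(4) by blast
  moreover have "e \<le> s" by (rule ps_geq[OF _ a(1) s]) (use Cons.prems(1) in auto)
  moreover have "s \<le> N" using ps_range[OF s] a by simp
  ultimately have ins: "insert s Rs \<subseteq> {e<..N}" using Cons.prems(1) by auto
  have sg: "set \<gamma> \<subseteq> {e<..N}" using Cons.prems(2) by simp
  show ?case by (rule Cons.IH[OF ins sg r Cons.prems(4)])
qed

lemma lt_sub: assumes "set xs \<subseteq> {1..e-1}" "1 \<le> (e::nat)" shows "\<forall>w\<in>set xs. w < e"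
proof
  fix w assume "w \<in> set xs"
  with assms(1) have "w \<in> {1..e-1}" by blast
  then show "w < e" using assms(2) by auto
qed

lemma sub1: assumes "A \<subseteq> {1..e-1}" "1 \<le> (e::nat)" "e \<le> N" shows "A \<subseteq> {1..N} - {e}"
proof
  fix w assume "w \<in> A"
  with assms(1) have "w \<in> {1..e-1}" by blast
  then show "w \<in> {1..N} - {e}" using assms(2,3) by auto
qed

lemma sub2: assumes "A \<subseteq> {e<..N}" "1 \<le> (e::nat)" shows "A \<subseteq> {1..N} - {e}"
proof
  fix w assume "w \<in> A"
  with assms(1) have "w \<in> {e<..N}" by blast
  then show "w \<in> {1..N} - {e}" using assms(2) by simp
qed

lemma disj_sub: assumes "A \<subseteq> {1..e-1}" "B \<subseteq> {e<..N}" "1 \<le> (e::nat)" shows "A \<inter> B = {}"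
proof -
  have "\<forall>w\<in>A. w < e"
  proof
    fix w assume "w \<in> A"
    with assms(1) have "w \<in> {1..e-1}" by blast
    then show "w < e" using assms(3) by auto
  qed
  moreover have "\<forall>w\<in>B. e < w" using assms(2) by auto
  ultimately show ?thesis by fastforce
qed

lemma full_minus:
  assumes "F \<subseteq> {1..N}" "card F = N - 1" "1 \<le> e" "e \<le> N" "e \<notin> F"
  shows "F = {1..N} - {e}"
proof -
  have "F \<subseteq> {1..N} - {e}" using assms by auto
  moreover have "card ({1..N} - {e}) = N - 1" using assms by simp
  ultimately show ?thesis using card_subset_eq[of "{1..N} - {e}" F] assms(2) by simp
qed

definition Ge :: "nat \<Rightarrow> nat \<Rightarrow> nat \<Rightarrow> nat list set" where
  "Ge k n e = {\<beta>. length \<beta> = n \<and> set \<beta> \<subseteq> {1..n+1} \<and> (\<exists>F. run k (n+1) {} \<beta> = Some F \<and> e \<notin> F)}"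

lemma finite_PF: "finite (PF n k)"
  by (rule finite_subset[OF _ finite_lists_length_eq[of "{1..n}" n]]) (auto simp: PF_def)

lemma finite_Rset: "finite (Rset k e N)"
  by (rule finite_subset[OF _ finite_lists_length_eq[of "{e<..N}" "N - e"]]) (auto simp: Rset_def)

lemma Ge_eq:
  assumes e: "1 \<le> e" "e \<le> n + 1"
  shows "Ge k n e = (\<Union>xy\<in>PF (e-1) k \<times> Rset k e (n+1). shuffles (fst xy) (snd xy))"
proof
  let ?N = "n + 1"
  show "Ge k n e \<subseteq> (\<Union>xy\<in>PF (e-1) k \<times> Rset k e (n+1). shuffles (fst xy) (snd xy))"
  proof
    fix \<beta> assume b: "\<beta> \<in> Ge k n e"
    then obtain F where F: "run k ?N {} \<beta> = Some F" "e \<notin> F" and len: "length \<beta> = n"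
      and sb: "set \<beta> \<subseteq> {1..?N}" unfolding Ge_def by blast
    have "e \<notin> set \<beta>" using run_set[OF F(1)] F(2) by blast
    then have sb': "set \<beta> \<subseteq> {1..?N} - {e}" using sb by blast
    define x where "x = filter (\<lambda>x. x < e) \<beta>"
    define y where "y = filter (\<lambda>x. e < x) \<beta>"
    have D0: "\<exists>F. run k ?N ({} \<union> {}) \<beta> = Some F \<and> e \<notin> F" using F by simp
    have D: "run k (e-1) {} x \<noteq> None \<and> (\<exists>R. run k ?N {} y = Some R \<and> e \<notin> R)"
      using iffD1[OF decomp[of "{}" e "{}" \<beta> ?N k] D0] sb' e unfolding x_def y_def by simp
    then obtain Lf R where Lf: "run k (e-1) {} x = Some Lf" and R: "run k ?N {} y = Some R" "e \<notin> R" by blast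
    have sx: "set x \<subseteq> {1..e-1}" unfolding x_def using sb by auto
    have sy: "set y \<subseteq> {e<..?N}" unfolding y_def using sb by auto
    have "Lf \<subseteq> {1..e-1}" using run_range[OF Lf sx] by simp
    moreover have "card Lf = length x" using run_card[OF _ Lf] by simp
    ultimately have lx: "length x \<le> e - 1" using card_mono[of "{1..e-1}" Lf] by simp
    have "R \<subseteq> {e<..?N}" by (rule run_right_range[OF _ sy R]) simp
    moreover have "card R = length y" using run_card[OF _ R(1)] by simp
    ultimately have ly: "length y \<le> ?N - e" using card_mono[of "{e<..?N}" R] by simp
    have fc: "filter (\<lambda>x. \<not> x < e) \<beta> = y" unfolding y_def
    proof (rule filter_cong[OF refl])
      fix w assume "w \<in> set \<beta>"
      then have "w \<noteq> e" using \<open>e \<notin> set \<beta>\<close> by blast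
      then show "(\<not> w < e) = (e < w)" by auto
    qed
    have "length x + length y = n" using sum_length_filter_compl[of "\<lambda>x. x < e" \<beta>] len fc
      unfolding x_def by simp
    then have lx': "length x = e - 1" and ly': "length y = ?N - e" using lx ly e by auto
    have "x \<in> PF (e-1) k" unfolding PF_def using lx' sx Lf parks_run by auto
    moreover have "y \<in> Rset k e ?N" unfolding Rset_def using ly' sy R by auto
    moreover have "\<beta> \<in> shuffles x y"
      using partition_in_shuffles[of \<beta> "\<lambda>x. x < e"] fc unfolding x_def by simp
    ultimately have "(x, y) \<in> PF (e-1) k \<times> Rset k e (n+1)" "\<beta> \<in> shuffles (fst (x, y)) (snd (x, y))" by simp_all
    then show "\<beta> \<in> (\<Union>xy\<in>PF (e-1) k \<times> Rset k e (n+1). shuffles (fst xy) (snd xy))" by (rule UN_I)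
  qed
next
  let ?N = "n + 1"
  show "(\<Union>xy\<in>PF (e-1) k \<times> Rset k e (n+1). shuffles (fst xy) (snd xy)) \<subseteq> Ge k n e"
  proof
    fix \<beta> assume "\<beta> \<in> (\<Union>xy\<in>PF (e-1) k \<times> Rset k e (n+1). shuffles (fst xy) (snd xy))"
    then obtain x y where x: "x \<in> PF (e-1) k" and y: "y \<in> Rset k e ?N" and b: "\<beta> \<in> shuffles x y" by auto
    have sx: "set x \<subseteq> {1..e-1}" and lx: "length x = e - 1" and px: "run k (e-1) {} x \<noteq> None"
      using x parks_run unfolding PF_def by auto
    have sy: "set y \<subseteq> {e<..?N}" and ly: "length y = ?N - e" and py: "\<exists>R. run k ?N {} y = Some R \<and> e \<notin> R"
      using y unfolding Rset_def by auto
    have len: "length \<beta> = n" using length_shuffles[OF b] lx ly e by simp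
    have sb: "set \<beta> \<subseteq> {1..?N} - {e}" using set_shuffles[OF b] sub1[OF sx e] sub2[OF sy e(1)] by simp
    have fx: "filter (\<lambda>z. z < e) \<beta> = x"
    proof -
      have "filter (\<lambda>z. z < e) \<beta> \<in> shuffles (filter (\<lambda>z. z < e) x) (filter (\<lambda>z. z < e) y)"
        using filter_shuffles[of "\<lambda>z. z < e" x y] b by blast
      moreover have "filter (\<lambda>z. z < e) x = x" using lt_sub[OF sx e(1)] by (intro filter_True) auto
      moreover have "filter (\<lambda>z. z < e) y = []" using sy by (intro filter_False) auto
      ultimately show ?thesis by simp
    qed
    have fy: "filter (\<lambda>z. e < z) \<beta> = y"
    proof -
      have "filter (\<lambda>z. e < z) \<beta> \<in> shuffles (filter (\<lambda>z. e < z) x) (filter (\<lambda>z. e < z) y)"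
        using filter_shuffles[of "\<lambda>z. e < z" x y] b by blast
      moreover have "filter (\<lambda>z. e < z) x = []" using lt_sub[OF sx e(1)] by (intro filter_False) auto
      moreover have "filter (\<lambda>z. e < z) y = y" using sy by (intro filter_True) auto
      ultimately show ?thesis by simp
    qed
    have "\<exists>F. run k ?N ({} \<union> {}) \<beta> = Some F \<and> e \<notin> F"
      by (rule iffD2[OF decomp[of "{}" e "{}" \<beta> ?N k]]) (use sb e px py fx fy in simp_all)
    then show "\<beta> \<in> Ge k n e" unfolding Ge_def using len sb by auto
  qed
qed

lemma card_Ge:
  assumes e: "1 \<le> e" "e \<le> n + 1"
  shows "card (Ge k n e) = (n choose (e - 1)) * card (PF (e-1) k) * card (Rset k e (n+1))"
proof -
  let ?I = "PF (e-1) k \<times> Rset k e (n+1)"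
  have fin: "finite ?I" using finite_PF finite_Rset by simp
  have disj: "\<forall>i\<in>?I. \<forall>j\<in>?I. i \<noteq> j \<longrightarrow> shuffles (fst i) (snd i) \<inter> shuffles (fst j) (snd j) = {}"
  proof (intro ballI impI)
    fix i j assume i: "i \<in> ?I" and j: "j \<in> ?I" and ij: "i \<noteq> j"
    show "shuffles (fst i) (snd i) \<inter> shuffles (fst j) (snd j) = {}"
    proof (rule ccontr)
      assume "shuffles (fst i) (snd i) \<inter> shuffles (fst j) (snd j) \<noteq> {}"
      then obtain z where zi: "z \<in> shuffles (fst i) (snd i)" and zj: "z \<in> shuffles (fst j) (snd j)" by blast
      have key: "filter (\<lambda>w. w < e) z = fst p \<and> filter (\<lambda>w. e < w) z = snd p"
        if p: "p \<in> ?I" and zp: "z \<in> shuffles (fst p) (snd p)" for p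
      proof -
        have sx: "set (fst p) \<subseteq> {1..e-1}" using p unfolding PF_def by auto
        have sy: "set (snd p) \<subseteq> {e<..n+1}" using p unfolding Rset_def by auto
        have "filter (\<lambda>w. w < e) z \<in> shuffles (filter (\<lambda>w. w < e) (fst p)) (filter (\<lambda>w. w < e) (snd p))"
          using filter_shuffles[of "\<lambda>w. w < e" "fst p" "snd p"] zp by blast
        moreover have "filter (\<lambda>w. w < e) (fst p) = fst p" using lt_sub[OF sx e(1)] by (intro filter_True) auto
        moreover have "filter (\<lambda>w. w < e) (snd p) = []" using sy by (intro filter_False) auto
        moreover have "filter (\<lambda>w. e < w) z \<in> shuffles (filter (\<lambda>w. e < w) (fst p)) (filter (\<lambda>w. e < w) (snd p))"
          using filter_shuffles[of "\<lambda>w. e < w" "fst p" "snd p"] zp by blast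
        moreover have "filter (\<lambda>w. e < w) (fst p) = []" using lt_sub[OF sx e(1)] by (intro filter_False) auto
        moreover have "filter (\<lambda>w. e < w) (snd p) = snd p" using sy by (intro filter_True) auto
        ultimately show ?thesis by simp
      qed
      from key[OF i zi] key[OF j zj] have "i = j" by (simp add: prod_eq_iff)
      then show False using ij by simp
    qed
  qed
  have cs: "card (shuffles (fst p) (snd p)) = n choose (e - 1)" if p: "p \<in> ?I" for p
  proof -
    have sx: "set (fst p) \<subseteq> {1..e-1}" "length (fst p) = e - 1" using p unfolding PF_def by auto
    have sy: "set (snd p) \<subseteq> {e<..n+1}" "length (snd p) = n + 1 - e" using p unfolding Rset_def by auto
    have "set (fst p) \<inter> set (snd p) = {}" by (rule disj_sub[OF sx(1) sy(1) e(1)])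
    from card_disjoint_shuffles[OF this] show ?thesis using sx sy e by simp
  qed
  have "card (Ge k n e) = (\<Sum>p\<in>?I. card (shuffles (fst p) (snd p)))"
    unfolding Ge_eq[OF e] by (rule card_UN_disjoint[OF fin]) (use disj in auto)
  also have "\<dots> = (\<Sum>p\<in>?I. n choose (e - 1))" by (rule sum.cong) (use cs in auto)
  also have "\<dots> = (n choose (e - 1)) * card (PF (e-1) k) * card (Rset k e (n+1))"
    by (simp add: card_cartesian_product)
  finally show ?thesis .
qed

lemma Ge_full:
  assumes "\<beta> \<in> Ge k n e" "1 \<le> e" "e \<le> n + 1"
  shows "run k (n+1) {} \<beta> = Some ({1..n+1} - {e})"
proof -
  obtain F where F: "run k (n+1) {} \<beta> = Some F" "e \<notin> F" and len: "length \<beta> = n"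
    and sb: "set \<beta> \<subseteq> {1..n+1}" using assms(1) unfolding Ge_def by blast
  have "F \<subseteq> {1..n+1}" using run_range[OF F(1) sb] by simp
  moreover have "card F = n" using run_card[OF _ F(1)] len by simp
  ultimately have "F = {1..n+1} - {e}" using full_minus[of F "n+1" e] F(2) assms(2,3) by simp
  then show ?thesis using F by simp
qed

lemma finite_Ge: "finite (Ge k n e)"
  by (rule finite_subset[OF _ finite_lists_length_eq[of "{1..n+1}" n]]) (auto simp: Ge_def)

lemma PF_split:
  "PF (n+1) k = (\<Union>e\<in>{1..n+1}. (\<lambda>(\<beta>, p). \<beta> @ [p]) ` (Ge k n e \<times> {p. 1 \<le> p \<and> p \<le> n+1 \<and> p \<le> e + k}))"
proof
  let ?N = "n + 1"
  show "PF (n+1) k \<subseteq> (\<Union>e\<in>{1..n+1}. (\<lambda>(\<beta>, p). \<beta> @ [p]) ` (Ge k n e \<times> {p. 1 \<le> p \<and> p \<le> n+1 \<and> p \<le> e + k}))"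
  proof
    fix \<alpha> assume "\<alpha> \<in> PF (n+1) k"
    then have len: "length \<alpha> = ?N" and sa: "set \<alpha> \<subseteq> {1..?N}" and pk: "run k ?N {} \<alpha> \<noteq> None"
      unfolding PF_def using parks_run by auto
    define \<beta> where "\<beta> = butlast \<alpha>"
    define p where "p = last \<alpha>"
    have ab: "\<alpha> = \<beta> @ [p]" unfolding \<beta>_def p_def using len by (intro append_butlast_last_id[symmetric]) auto
    have sb: "set \<beta> \<subseteq> {1..?N}" and pr: "p \<in> {1..?N}" using sa unfolding ab by auto
    have lb: "length \<beta> = n" using len unfolding ab by simp
    obtain F where F: "run k ?N {} \<beta> = Some F" and ps: "park_step k ?N F p \<noteq> None"
      using pk unfolding ab run_snoc by (auto split: option.splits)
    have FR: "F \<subseteq> {1..?N}" using run_range[OF F sb] by simp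
    have cF: "card F = n" using run_card[OF _ F] lb by simp
    have "card F < card {1..?N}" using cF by simp
    moreover have fF: "finite F" using FR finite_subset by blast
    ultimately have "\<not> {1..?N} \<subseteq> F" using card_mono[OF fF, of "{1..?N}"] by linarith
    then obtain e where e: "e \<in> {1..?N}" "e \<notin> F" by blast
    have Fe: "F = {1..?N} - {e}" using full_minus[of F ?N e] FR cF e by simp
    have "p \<le> e + k" using last_ok[of e ?N p k] e pr ps Fe by simp
    moreover have "\<beta> \<in> Ge k n e" unfolding Ge_def using lb sb F e by auto
    ultimately have "(\<beta>, p) \<in> Ge k n e \<times> {p. 1 \<le> p \<and> p \<le> n+1 \<and> p \<le> e + k}" using pr by simp
    then have "\<alpha> \<in> (\<lambda>(\<beta>, p). \<beta> @ [p]) ` (Ge k n e \<times> {p. 1 \<le> p \<and> p \<le> n+1 \<and> p \<le> e + k})"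
      unfolding ab by (rule rev_image_eqI) simp
    then show "\<alpha> \<in> (\<Union>e\<in>{1..n+1}. (\<lambda>(\<beta>, p). \<beta> @ [p]) ` (Ge k n e \<times> {p. 1 \<le> p \<and> p \<le> n+1 \<and> p \<le> e + k}))"
      using e(1) by blast
  qed
next
  let ?N = "n + 1"
  show "(\<Union>e\<in>{1..n+1}. (\<lambda>(\<beta>, p). \<beta> @ [p]) ` (Ge k n e \<times> {p. 1 \<le> p \<and> p \<le> n+1 \<and> p \<le> e + k})) \<subseteq> PF (n+1) k"
  proof
    fix \<alpha> assume "\<alpha> \<in> (\<Union>e\<in>{1..n+1}. (\<lambda>(\<beta>, p). \<beta> @ [p]) ` (Ge k n e \<times> {p. 1 \<le> p \<and> p \<le> n+1 \<and> p \<le> e + k}))"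
    then obtain e \<beta> p where e: "e \<in> {1..?N}" and b: "\<beta> \<in> Ge k n e" and p: "1 \<le> p" "p \<le> ?N" "p \<le> e + k"
      and ab: "\<alpha> = \<beta> @ [p]" by auto
    have F: "run k ?N {} \<beta> = Some ({1..?N} - {e})" using Ge_full[OF b] e by simp
    have "park_step k ?N ({1..?N} - {e}) p \<noteq> None" using last_ok[of e ?N p k] e p by simp
    then have "run k ?N {} \<alpha> \<noteq> None" unfolding ab run_snoc using F by (auto split: option.splits)
    moreover have "length \<alpha> = ?N" "set \<alpha> \<subseteq> {1..?N}" using b p unfolding ab Ge_def by auto
    ultimately show "\<alpha> \<in> PF (n+1) k" unfolding PF_def using parks_run by auto
  qed
qed

lemma card_P: "1 \<le> e \<Longrightarrow> card {p. 1 \<le> p \<and> p \<le> N \<and> p \<le> e + k} = min (e + k) N"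
proof -
  assume "1 \<le> e"
  have "{p. 1 \<le> p \<and> p \<le> N \<and> p \<le> e + k} = {1..min (e + k) N}" by auto
  then show ?thesis by simp
qed

theorem main:
  fixes n k :: nat
  shows "card (PF (n + 1) k) =
    (\<Sum>i = 0..n. (n choose i) * min ((i + 1) + k) (n + 1) * card (PF i k) * (n - i + 1) ^ (n - i - 1))"
proof -
  let ?N = "n + 1"
  let ?P = "\<lambda>e. {p. 1 \<le> p \<and> p \<le> n+1 \<and> p \<le> e + k}"
  let ?f = "\<lambda>(\<beta>::nat list, p::nat). \<beta> @ [p]"
  have inj: "inj_on ?f X" for X by (rule inj_onI) auto
  have disj: "\<forall>e\<in>{1..?N}. \<forall>e'\<in>{1..?N}. e \<noteq> e' \<longrightarrow> ?f ` (Ge k n e \<times> ?P e) \<inter> ?f ` (Ge k n e' \<times> ?P e') = {}"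
  proof (intro ballI impI)
    fix e e' assume e: "e \<in> {1..?N}" and e': "e' \<in> {1..?N}" and ne: "e \<noteq> e'"
    show "?f ` (Ge k n e \<times> ?P e) \<inter> ?f ` (Ge k n e' \<times> ?P e') = {}"
    proof (rule ccontr)
      assume "?f ` (Ge k n e \<times> ?P e) \<inter> ?f ` (Ge k n e' \<times> ?P e') \<noteq> {}"
      then obtain \<alpha> where a1: "\<alpha> \<in> ?f ` (Ge k n e \<times> ?P e)" and a2: "\<alpha> \<in> ?f ` (Ge k n e' \<times> ?P e')"
        by blast
      from a1 obtain x where x: "x \<in> Ge k n e \<times> ?P e" and ax: "\<alpha> = ?f x" by (rule imageE)
      from a2 obtain x' where x': "x' \<in> Ge k n e' \<times> ?P e'" and ax': "\<alpha> = ?f x'" by (rule imageE)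
      have b: "fst x \<in> Ge k n e" using x by (simp add: mem_Times_iff)
      have b': "fst x' \<in> Ge k n e'" using x' by (simp add: mem_Times_iff)
      have "fst x @ [snd x] = fst x' @ [snd x']" using ax ax' by (simp add: case_prod_beta)
      then have "fst x = fst x'" by simp
      then have S: "{1..?N} - {e} = {1..?N} - {e'}" using Ge_full[OF b] Ge_full[OF b'] e e' by simp
      have m1: "e' \<in> {1..?N} - {e}" using e' ne by simp
      have m2: "e' \<notin> {1..?N} - {e'}" by simp
      from m1 have "e' \<in> {1..?N} - {e'}" unfolding S .
      with m2 show False by contradiction
    qed
  qed
  have "card (PF (n+1) k) = (\<Sum>e\<in>{1..?N}. card (?f ` (Ge k n e \<times> ?P e)))"
    unfolding PF_split
  proof (rule card_UN_disjoint)
    show "finite {1..?N}" by simp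
    show "\<forall>e\<in>{1..?N}. finite (?f ` (Ge k n e \<times> ?P e))"
      by (intro ballI finite_imageI finite_cartesian_product finite_Ge) simp
  qed (rule disj)
  also have "\<dots> = (\<Sum>e\<in>{1..?N}. card (Ge k n e) * min (e + k) ?N)"
  proof (rule sum.cong[OF refl])
    fix e assume e: "e \<in> {1..?N}"
    have "card (?f ` (Ge k n e \<times> ?P e)) = card (Ge k n e \<times> ?P e)" by (rule card_image[OF inj])
    also have "\<dots> = card (Ge k n e) * card (?P e)" by (rule card_cartesian_product)
    finally show "card (?f ` (Ge k n e \<times> ?P e)) = card (Ge k n e) * min (e + k) ?N"
      using card_P[of e ?N k] e by simp
  qed
  also have "\<dots> = (\<Sum>i=0..n. card (Ge k n (Suc i)) * min (Suc i + k) ?N)"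
    using sum.shift_bounds_cl_Suc_ivl[of "\<lambda>e. card (Ge k n e) * min (e + k) ?N" 0 n] by simp
  also have "\<dots> = (\<Sum>i = 0..n. (n choose i) * min ((i + 1) + k) (n + 1) * card (PF i k) * (n - i + 1) ^ (n - i - 1))"
  proof (rule sum.cong[OF refl])
    fix i assume i: "i \<in> {0..n}"
    have "card (Ge k n (Suc i)) = (n choose i) * card (PF i k) * card (Rset k (Suc i) (n+1))"
      using card_Ge[of "Suc i" n k] i by simp
    moreover have "card (Rset k (Suc i) (n+1)) = (n - i + 1) ^ (n - i - 1)"
      using card_Rset[of "Suc i" "n+1" k] i by simp
    ultimately have G: "card (Ge k n (Suc i)) = (n choose i) * card (PF i k) * (n - i + 1) ^ (n - i - 1)"
      by simp
    have m: "min (Suc i + k) ?N = min ((i + 1) + k) (n + 1)" by simp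
    show "card (Ge k n (Suc i)) * min (Suc i + k) ?N =
      (n choose i) * min ((i + 1) + k) (n + 1) * card (PF i k) * (n - i + 1) ^ (n - i - 1)"
      unfolding G m by (simp only: mult_ac)
  qed
  finally show ?thesis .
qed

theorem theorem1p1:
  fixes n k :: nat
  assumes "1 \<le> n" and "k \<le> n - 1"
  shows "card (PF (n + 1) k) =
    (\<Sum>i = 0..n. (n choose i) * min ((i + 1) + k) (n + 1) * card (PF i k) * (n - i + 1) ^ (n - i - 1))"
  by (rule main)

end
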